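(* Let $K\subset S^3$ be a knot whose A-polynomial $A_K(L,M)$ is irreducible in $\mathbb{C}[L,M]$ and satisfies $A_K(-L,M)\neq A_K(L,M)$. Let $R_K(L,M):=\mathrm{Res}_\lambda\big(A_K(\lambda,M),\lambda^2-L\big)$. Then $R_K(L,M^2)$ is irreducible in $\mathbb{C}[L,M]$ and $\deg_L(R_K)=\deg_L(A_K)$.
   Context: $A_K(L,M)$ is the A-polynomial of Cooper–Culler–Gillet–Long–Shalen of $K$ (without the abelian factor $L-1$); it satisfies $A_K(L,-M)=A_K(L,M)$. $\mathrm{Res}_\lambda$ denotes the resultant eliminating the variable $\lambda$. *)

theory Defs
  imports "HOL-Computational_Algebra.Polynomial_Factorial" "Subresultants.Resultant_Prelim"
begin

text \<open>Bivariate polynomials in \<open>\<complex>[L,M]\<close> are represented as \<open>complex poly poly\<close>: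
  the outer variable is \<open>L\<close>, the inner variable (in the coefficients) is \<open>M\<close>.\<close>

definition varL :: "complex poly poly" where
  "varL = [:0, 1:]"

definition negL :: "complex poly poly \<Rightarrow> complex poly poly" where
  "negL P = P \<circ>\<^sub>p [:0, -1:]"

definition negM :: "complex poly poly \<Rightarrow> complex poly poly" where
  "negM P = map_poly (\<lambda>c. c \<circ>\<^sub>p [:0, -1:]) P"

definition sqM :: "complex poly poly \<Rightarrow> complex poly poly" where
  "sqM P = map_poly (\<lambda>c. c \<circ>\<^sub>p [:0, 0, 1:]) P"

text \<open>\<open>Res_\<lambda>(A(\<lambda>,M), \<lambda>^2 - L)\<close>: both are regarded as polynomials in \<open>\<lambda>\<close> with coefficients
  in \<open>\<complex>[L,M]\<close>; \<open>A(\<lambda>,M)\<close> has coefficients \<open>coeff A i\<close> (constants in \<open>L\<close>).\<close>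
definition R_poly :: "complex poly poly \<Rightarrow> complex poly poly" where
  "R_poly A = resultant (map_poly (\<lambda>c. [:c:]) A) [: - varL, 0, 1 :]"

end

theory Submission
  imports Defs "Subresultants.Subresultant" "HOL-Computational_Algebra.Field_as_Ring"
begin


lemma det1: assumes "(A :: 'a :: comm_ring_1 mat) \<in> carrier_mat 1 1"
  shows "det A = A $$ (0,0)"
proof -
  have "det A = (\<Sum>j<1. A $$ (0,j) * cofactor A 0 j)" by (rule laplace_expansion_row[OF assms], simp)
  also have "\<dots> = A $$ (0,0)" using assms
    by (simp add: cofactor_def det_dim_zero[OF mat_delete_carrier[OF assms, simplified]])
  finally show ?thesis .
qed

lemma det2: assumes "(A :: 'a :: comm_ring_1 mat) \<in> carrier_mat 2 2"
  shows "det A = A $$ (0,0) * A $$ (1,1) - A $$ (0,1) * A $$ (1,0)"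
proof -
  have c: "mat_delete A 0 j \<in> carrier_mat 1 1" for j using mat_delete_carrier[OF assms] by simp
  have "det A = (\<Sum>j<2. A $$ (0,j) * cofactor A 0 j)" by (rule laplace_expansion_row[OF assms], simp)
  also have "\<dots> = A $$ (0,0) * A $$ (1,1) - A $$ (0,1) * A $$ (1,0)" using assms
    apply (simp add: cofactor_def det1[OF c] numeral_2_eq_2)
    by (simp add: mat_delete_def)
  finally show ?thesis .
qed

lemma det3: assumes "(A :: 'a :: comm_ring_1 mat) \<in> carrier_mat 3 3"
  shows "det A = A $$ (0,0) * (A $$ (1,1) * A $$ (2,2) - A $$ (1,2) * A $$ (2,1))
     - A $$ (0,1) * (A $$ (1,0) * A $$ (2,2) - A $$ (1,2) * A $$ (2,0))
     + A $$ (0,2) * (A $$ (1,0) * A $$ (2,1) - A $$ (1,1) * A $$ (2,0))"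
proof -
  have c: "mat_delete A 0 j \<in> carrier_mat 2 2" for j using mat_delete_carrier[OF assms] by simp
  have "det A = (\<Sum>j<3. A $$ (0,j) * cofactor A 0 j)" by (rule laplace_expansion_row[OF assms], simp)
  also have "\<dots> = A $$ (0,0) * (A $$ (1,1) * A $$ (2,2) - A $$ (1,2) * A $$ (2,1))
     - A $$ (0,1) * (A $$ (1,0) * A $$ (2,2) - A $$ (1,2) * A $$ (2,0))
     + A $$ (0,2) * (A $$ (1,0) * A $$ (2,1) - A $$ (1,1) * A $$ (2,0))" using assms
    apply (simp add: cofactor_def det2[OF c] numeral_3_eq_3)
    by (simp add: mat_delete_def numeral_2_eq_2 algebra_simps)
  finally show ?thesis .
qed

lemma res_quad_lin:
  fixes c e f :: "'a :: comm_ring_1"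
  assumes o: "f \<noteq> 0"
  shows "resultant [:c,0,1:] [:e,f:] = e * e + c * f * f"
proof -
  have dg: "degree [:c,0,1:] = 2" "degree [:e,f:] = 1" using o by auto
  have car: "sylvester_mat [:c,0,1:] [:e,f:] \<in> carrier_mat 3 3"
    using sylvester_carrier_mat[of "[:c,0,1:]" "[:e,f:]"] unfolding dg by (simp add: numeral_3_eq_3)
  show ?thesis unfolding resultant_def det3[OF car]
    using o by (simp add: sylvester_index_mat dg algebra_simps)
qed


interpretation cpoly: inj_comm_ring_hom "\<lambda>c::'a::comm_ring_1. [:c:]"
  by (unfold_locales, auto)
interpretation cpolyp: map_poly_inj_comm_ring_hom "\<lambda>c::'a::comm_ring_1. [:c:]" ..

lemma pCons_as_add: fixes p :: "'a::comm_ring_1 poly" shows "pCons a p = [:a:] + [:0,1:] * p"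
  by (simp add: smult_one flip: pCons_0_as_mult)

lemma ring_aux: fixes x y z :: "'a::comm_ring_1"
  shows "[:x:] + (G + [:y:]) * ([:z:] - B * G) = [:x + y*z:] - ([:y:]*B + B*G - [:z:]) * G"
proof -
  have r: "(X::'b::comm_ring_1) + (G + Y)*(Z - B*G) = (X + Y*Z) - (Y*B + B*G - Z)*G" for X G Y Z B
    by (simp add: algebra_simps)
  have "[:x:] + (G + [:y:]) * ([:z:] - B * G) = ([:x:] + [:y:]*[:z:]) - ([:y:]*B + B*G - [:z:])*G" by (rule r)
  also have "[:x:] + [:y:]*[:z:] = [:x + y*z:]" by simp
  finally show ?thesis .
qed

lemma cong_sq:
  fixes p :: "'a::comm_ring_1 poly"
  shows "\<exists>B. map_poly (\<lambda>c. [:c:]) (p \<circ>\<^sub>p [:0,0,1:]) + B * [:-[:0,1:],0,1:] = [:p:]"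
proof (induction p)
  case 0 show ?case by (rule exI[of _ 0], simp)
next
  case (pCons a p)
  define G where "G = ([:-[:0,1:],0,1:] :: 'a poly poly)"
  define L where "L = ([:0,1:] :: 'a poly)"
  from pCons obtain B where B0: "map_poly (\<lambda>c. [:c:]) (p \<circ>\<^sub>p [:0,0,1:]) + B * G = [:p:]"
    unfolding G_def by blast
  have B: "map_poly (\<lambda>c. [:c:]) (p \<circ>\<^sub>p [:0,0,1:]) = [:p:] - B * G"
    using B0 by (simp add: eq_diff_eq)
  have M: "map_poly (\<lambda>c. [:c:]) [:a:] = [:[:a:]:]" by (rule poly_eqI) (simp add: coeff_map_poly coeff_pCons split: nat.split)
  have X: "map_poly (\<lambda>c. [:c:]) ([:0,0,1:] :: 'a poly) = G + [:L:]"
    unfolding G_def L_def by (rule poly_eqI) (simp add: coeff_map_poly coeff_pCons split: nat.split)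
  have "map_poly (\<lambda>c. [:c:]) (pCons a p \<circ>\<^sub>p [:0,0,1:])
     = [:[:a:]:] + (G + [:L:]) * ([:p:] - B * G)"
    unfolding pcompose_pCons cpolyp.hom_add cpolyp.hom_mult X B M ..
  also have "\<dots> = [:[:a:] + L * p:] - ([:L:] * B + B * G - [:p:]) * G"
    by (rule ring_aux)
  also have "[:a:] + L * p = pCons a p" unfolding L_def by (rule pCons_as_add[symmetric])
  finally have "map_poly (\<lambda>c. [:c:]) (pCons a p \<circ>\<^sub>p [:0,0,1:]) + ([:L:] * B + B * G - [:p:]) * G = [:pCons a p:]"
    by (simp add: eq_diff_eq)
  then show ?case unfolding G_def by blast
qed

lemma m1sq: "((-1::'b::comm_ring_1)^k)^2 = 1"
  by (induct k) (simp_all add: power_mult_distrib)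

lemma res_main:
  fixes A Ev Od :: "'a::idom poly"
  assumes A: "A = Ev \<circ>\<^sub>p [:0,0,1:] + [:0,1:] * (Od \<circ>\<^sub>p [:0,0,1:])" and deg: "degree A \<ge> 1"
  shows "resultant (map_poly (\<lambda>c.[:c:]) A) [:-[:0,1:],0,1:] = Ev*Ev - [:0,1:]*Od*Od"
proof -
  define G where "G = ([:-[:0,1:],0,1:] :: 'a poly poly)"
  define F where "F = map_poly (\<lambda>c.[:c:]) A"
  define H where "H = [:Ev, Od:]"
  obtain B1 where B1: "map_poly (\<lambda>c. [:c:]) (Ev \<circ>\<^sub>p [:0,0,1:]) + B1 * G = [:Ev:]"
    using cong_sq unfolding G_def by blast
  obtain B2 where B2: "map_poly (\<lambda>c. [:c:]) (Od \<circ>\<^sub>p [:0,0,1:]) + B2 * G = [:Od:]"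
    using cong_sq unfolding G_def by blast
  have mx: "map_poly (\<lambda>c. [:c:]) ([:0,1:] :: 'a poly) = [:0,1:]"
    by (rule poly_eqI) (simp add: coeff_map_poly coeff_pCons split: nat.split)
  have e1: "map_poly (\<lambda>c. [:c:]) (Ev \<circ>\<^sub>p [:0,0,1:]) = [:Ev:] - B1 * G"
    using B1 by (simp add: eq_diff_eq)
  have e2: "map_poly (\<lambda>c. [:c:]) (Od \<circ>\<^sub>p [:0,0,1:]) = [:Od:] - B2 * G"
    using B2 by (simp add: eq_diff_eq)
  have "F = ([:Ev:] - B1 * G) + [:0,1:] * ([:Od:] - B2 * G)"
    unfolding F_def A cpolyp.hom_add cpolyp.hom_mult mx e1 e2 ..
  also have "\<dots> = ([:Ev:] + [:0,1:] * [:Od:]) - (B1 + [:0,1:] * B2) * G"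
    by (simp add: algebra_simps)
  also have "[:Ev:] + [:0,1:] * [:Od:] = H" unfolding H_def by simp
  finally have FGH: "F + (B1 + [:0,1:] * B2) * G = H" by simp
  define B where "B = B1 + [:0,1:] * B2"
  note FGH = FGH[folded B_def]
  have dF: "degree F = degree A" unfolding F_def by simp
  have dG: "degree G = 2" "lead_coeff G = 1" "G \<noteq> 0" unfolding G_def by auto
  have F1: "F = H" if "degree A = 1"
  proof -
    have "B = 0"
    proof (rule ccontr)
      assume "B \<noteq> 0"
      then have "degree (B * G) \<ge> 2" using dG by (simp add: degree_mult_eq)
      moreover have "B * G = H - F" using FGH by (simp add: algebra_simps)
      moreover have "degree (H - F) \<le> 1"
      proof (rule degree_diff_le)
        show "degree H \<le> 1" unfolding H_def by (rule order.trans[OF degree_pCons_le], simp)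
        show "degree F \<le> 1" using that dF by simp
      qed
      ultimately show False by simp
    qed
    then show ?thesis using FGH by simp
  qed
  show ?thesis
  proof (cases "Od = 0")
    case False
    have dH: "degree H = 1" unfolding H_def using False by simp
    have "resultant F G = resultant G H"
    proof (cases "degree A = 1")
      case True
      have FH: "F = H" using F1 True .
      have "resultant F G = (-1)^(degree F * degree G) * resultant G F" by (rule resultant_swap)
      also have "(-1)^(degree F * degree G) = (1::'a poly)" using dG(1) dF True by simp
      finally show ?thesis using FH by simp
    next
      case False
      then have "degree G \<le> degree F" using deg dF dG by simp
      from BT_lemma_1_12[OF FGH this _, of 0] dH dG
      have "subresultant 0 F G = subresultant 0 G H"
        by (simp add: power_mult m1sq)
      from arg_cong[OF this, of "\<lambda>x. coeff x 0"] show ?thesis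
        unfolding coeff_subresultant_0_0_resultant .
    qed
    also have "\<dots> = Ev * Ev + (-[:0,1:]) * Od * Od"
      unfolding G_def H_def by (rule res_quad_lin[OF False])
    finally show ?thesis unfolding F_def G_def by simp
  next
    case True
    have E0: "Ev \<noteq> 0"
    proof
      assume "Ev = 0" then have "A = 0" using True A by simp
      with deg show False by simp
    qed
    have dH: "degree H = 0" "H = [:Ev:]" unfolding H_def using True by auto
    have d2: "degree A \<noteq> 1" using F1 dH dF by auto
    then have "degree G \<le> degree F" using deg dF dG by simp
    from BT_lemma_1_13[OF FGH this] dH dG
    have "subresultant 0 F G = smult Ev [:Ev:]"
      by (simp add: power_mult m1sq)
    from arg_cong[OF this, of "\<lambda>x. coeff x 0"] have "resultant F G = Ev * Ev"
      unfolding coeff_subresultant_0_0_resultant by simp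
    then show ?thesis unfolding F_def G_def using True by simp
  qed
qed



definition mc :: "complex poly \<Rightarrow> complex poly poly \<Rightarrow> complex poly poly" where
  "mc q P = map_poly (\<lambda>c. c \<circ>\<^sub>p q) P"

interpretation mcp: map_poly_comm_ring_hom "\<lambda>c::complex poly. c \<circ>\<^sub>p q" for q ..

lemma mc_hom: "mc q (X * Y) = mc q X * mc q Y" "mc q (X + Y) = mc q X + mc q Y"
  "mc q (X - Y) = mc q X - mc q Y" "mc q (-X) = - mc q X" "mc q 1 = 1" "mc q 0 = 0"
  unfolding mc_def by (simp_all add: mcp.hom_mult mcp.hom_add mcp.hom_minus mcp.hom_uminus)

lemma coeff_mc: "coeff (mc q P) i = coeff P i \<circ>\<^sub>p q"
  unfolding mc_def by (simp add: coeff_map_poly)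

lemma mc_mc: "mc q (mc r P) = mc (r \<circ>\<^sub>p q) P"
  by (rule poly_eqI) (simp add: coeff_mc pcompose_assoc)

lemma mc_id: "mc [:0,1:] P = P"
  by (rule poly_eqI) (metis coeff_mc pcompose_idR)

lemma mc_const: "mc q [:[:a:]:] = [:[:a:]:]"
  by (rule poly_eqI) (simp add: coeff_mc coeff_pCons split: nat.split)

lemma mc_inj: assumes "degree q > 0" "mc q X = mc q Y" shows "X = Y"
proof (rule poly_eqI)
  fix i
  have "(coeff X i - coeff Y i) \<circ>\<^sub>p q = 0"
    using arg_cong[OF assms(2), of "\<lambda>P. coeff P i"] by (simp add: coeff_mc pcompose_diff)
  from pcompose_eq_0[OF this assms(1)] show "coeff X i = coeff Y i" by simp
qed

lemma mc_dvd: "X dvd Y \<Longrightarrow> mc q X dvd mc q Y"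
  by (metis dvd_def mc_hom(1))

lemma mc_unit: "is_unit X \<Longrightarrow> is_unit (mc q X)"
  by (metis mc_dvd mc_hom(5))

lemma negM_mc: "negM = mc [:0,-1:]" unfolding negM_def mc_def by auto
lemma sqM_mc: "sqM = mc [:0,0,1:]" unfolding sqM_def mc_def by auto

lemma comp1: "[:0,-1:] \<circ>\<^sub>p [:0,-1:] = ([:0,1:] :: complex poly)" by (simp add: pcompose_pCons)
lemma comp2: "[:0,\<i>:] \<circ>\<^sub>p [:0,\<i>:] = ([:0,-1:] :: complex poly)" by (simp add: pcompose_pCons)
lemma comp3: "[:0,0,1:] \<circ>\<^sub>p [:0,-1:] = ([:0,0,1:] :: complex poly)" by (simp add: pcompose_pCons)
lemma comp4: "[:0,0,1:] \<circ>\<^sub>p [:0,\<i>:] = [:0,-1:] \<circ>\<^sub>p ([:0,0,1:] :: complex poly)" by (simp add: pcompose_pCons)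

lemma negM_negM: "negM (negM X) = X" unfolding negM_mc mc_mc comp1 mc_id ..
lemma negM_sqM: "negM (sqM X) = sqM X" unfolding negM_mc sqM_mc mc_mc comp3 ..
lemma rho_rho: "mc [:0,\<i>:] (mc [:0,\<i>:] X) = negM X" unfolding negM_mc mc_mc comp2 ..
lemma rho_sqM: "mc [:0,\<i>:] (sqM X) = sqM (negM X)" unfolding negM_mc sqM_mc mc_mc comp4 ..
lemma sqM_inj: "sqM X = sqM Y \<Longrightarrow> X = Y" unfolding sqM_mc by (rule mc_inj, auto)

lemma unit_D: fixes X :: "complex poly poly" assumes "is_unit X" shows "\<exists>a. a \<noteq> 0 \<and> X = [:[:a:]:]"
proof -
  from assms obtain c where c: "X = [:c:]" "is_unit c" using is_unit_poly_iff by blast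
  then obtain a where "c = [:a:]" "is_unit a" using is_unit_poly_iff by blast
  with c show ?thesis by auto
qed

lemma const_unit: "a \<noteq> 0 \<Longrightarrow> is_unit ([:[:a:]:] :: complex poly poly)"
  by (simp add: is_unit_poly_iff)

lemma evenodd_decomp:
  fixes p :: "'a::comm_ring_1 poly"
  shows "\<exists>d e. p = d \<circ>\<^sub>p [:0,0,1:] + [:0,1:] * (e \<circ>\<^sub>p [:0,0,1:])"
proof (induction p)
  case 0 show ?case by (rule exI[of _ 0], rule exI[of _ 0], simp)
next
  case (pCons a p)
  then obtain d e where p: "p = d \<circ>\<^sub>p [:0,0,1:] + [:0,1:] * (e \<circ>\<^sub>p [:0,0,1:])" by blast
  have "pCons a p = (pCons a e) \<circ>\<^sub>p [:0,0,1:] + [:0,1:] * (d \<circ>\<^sub>p [:0,0,1:])"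
    unfolding pcompose_pCons p
    by (simp add: algebra_simps pCons_eq_iff flip: pCons_0_as_mult)
  then show ?case by blast
qed

lemma neg_one_const: "([:-1:] :: 'a::comm_ring_1 poly) = -1"
  by (rule poly_eqI) (simp add: coeff_pCons split: nat.split)

lemma even_descent_c: fixes c :: "complex poly"
  assumes "c \<circ>\<^sub>p [:0,-1:] = c" shows "\<exists>d. c = d \<circ>\<^sub>p [:0,0,1:]"
proof -
  obtain d e where c: "c = d \<circ>\<^sub>p [:0,0,1:] + [:0,1:] * (e \<circ>\<^sub>p [:0,0,1:])"
    using evenodd_decomp by blast
  define E where "E = e \<circ>\<^sub>p [:0,0,1:]"
  have h1: "(d \<circ>\<^sub>p [:0,0,1:]) \<circ>\<^sub>p [:0,-1:] = d \<circ>\<^sub>p [:0,0,1:]"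
    by (simp only: comp3 flip: pcompose_assoc)
  have h2: "(e \<circ>\<^sub>p [:0,0,1:]) \<circ>\<^sub>p [:0,-1:] = E"
    unfolding E_def by (simp only: comp3 flip: pcompose_assoc)
  have h3: "([:0,1:] :: complex poly) \<circ>\<^sub>p [:0,-1:] = - [:0,1:]" by (simp add: pcompose_pCons neg_one_const)
  have "c \<circ>\<^sub>p [:0,-1:] = d \<circ>\<^sub>p [:0,0,1:] - [:0,1:] * E"
    unfolding c pcompose_add pcompose_mult h1 h2 h3 by simp
  with assms c have "[:0,1:] * E + [:0,1:] * E = 0" unfolding E_def[symmetric]
    by (simp add: algebra_simps)
  then have "[:0,1:] * E = 0" by simp
  then have "E = 0" by simp
  with c show ?thesis unfolding E_def by auto
qed

lemma even_descent: fixes X :: "complex poly poly"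
  assumes "negM X = X" shows "\<exists>Y. X = sqM Y"
proof -
  define f where "f = (\<lambda>c::complex poly. SOME d. c = d \<circ>\<^sub>p [:0,0,1:])"
  have f: "c = f c \<circ>\<^sub>p [:0,0,1:]" if "c \<circ>\<^sub>p [:0,-1:] = c" for c
    unfolding f_def using even_descent_c[OF that] by (rule someI_ex)
  have f0: "f 0 = 0" using f[of 0] pcompose_eq_0[of "f 0" "[:0,0,1:]"] by simp
  have ev: "coeff X i \<circ>\<^sub>p [:0,-1:] = coeff X i" for i
    using arg_cong[OF assms, of "\<lambda>P. coeff P i"] by (simp add: negM_mc coeff_mc)
  have "X = sqM (map_poly f X)"
    by (rule poly_eqI) (simp only: sqM_mc coeff_mc coeff_map_poly[of f, OF f0] f[OF ev, symmetric])
  then show ?thesis by blast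
qed

definition M1 :: "complex poly poly" where "M1 = [:[:0,1:]:]"

lemma M1_dvd: assumes "\<And>i. poly (coeff P i) 0 = 0" shows "M1 dvd P"
proof -
  have d: "[:0,1:] dvd coeff P i" for i
  proof -
    have "[:-0,1:] dvd coeff P i" using assms[of i] by (simp only: poly_eq_0_iff_dvd)
    then show ?thesis by simp
  qed
  define Y where "Y = map_poly (\<lambda>c. c div [:0,1:]) P"
  have e: "M1 * Y = smult [:0,1:] Y" unfolding M1_def by simp
  have "smult [:0,1:] Y = P"
  proof (rule poly_eqI)
    fix n
    have "coeff (smult [:0,1:] Y) n = [:0,1:] * (coeff P n div [:0,1:])"
      unfolding Y_def coeff_smult by (simp add: coeff_map_poly)
    also have "\<dots> = coeff P n" by (rule dvd_mult_div_cancel[OF d])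
    finally show "coeff (smult [:0,1:] Y) n = coeff P n" .
  qed
  with e show ?thesis by (metis dvdI)
qed

lemma M1_dvdD: assumes "M1 dvd P" shows "poly (coeff P i) 0 = 0"
proof -
  from assms obtain Y where "P = M1 * Y" by auto
  then show ?thesis by (simp add: M1_def)
qed

lemma M1_not_unit: "\<not> is_unit M1"
  unfolding M1_def is_unit_poly_iff by auto

lemma poly_coeff_mc0: "q = [:0,-1:] \<or> q = [:0,0,1:] \<Longrightarrow> poly (coeff (mc q X) i) 0 = poly (coeff X i) 0"
  by (auto simp: coeff_mc poly_pcompose)

lemma mc_const1: "mc q [:a:] = [:a \<circ>\<^sub>p q:]"
  by (rule poly_eqI) (simp add: coeff_mc coeff_pCons split: nat.split)

lemma x_neg: "([:0,1:] :: complex poly) \<circ>\<^sub>p [:0,-1:] = - [:0,1:]" by (simp add: pcompose_pCons neg_one_const)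

lemma negM_M1: "negM M1 = - M1"
  unfolding negM_mc M1_def mc_const1 x_neg by simp

lemma prime_inv_hom:
  fixes f :: "'a::algebraic_semidom \<Rightarrow> 'a"
  assumes mult: "\<And>x y. f (x*y) = f x * f y" and inv: "\<And>x. f (f x) = x" and one: "f 1 = 1"
    and zero: "f 0 = 0" and p: "prime_elem x"
  shows "prime_elem (f x)"
proof -
  have dvd: "f a dvd f b" if "a dvd b" for a b
  proof -
    from that obtain c where "b = a * c" by (blast elim: dvdE)
    then have "f b = f a * f c" using mult by simp
    then show ?thesis by simp
  qed
  have x0: "x \<noteq> 0" "\<not> is_unit x" using p unfolding prime_elem_def by blast+
  show ?thesis unfolding prime_elem_def
  proof (intro conjI allI impI)
    show "f x \<noteq> 0"
    proof
      assume "f x = 0" then have "f (f x) = f 0" by simp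
      with x0 inv zero show False by simp
    qed
    show "\<not> is_unit (f x)"
    proof
      assume "is_unit (f x)" then have "f (f x) dvd f 1" by (rule dvd)
      with x0 inv one show False by simp
    qed
    fix a b assume "f x dvd a * b"
    then have "f (f x) dvd f (a * b)" by (rule dvd)
    then have "x dvd f a * f b" using inv mult by simp
    then have "x dvd f a \<or> x dvd f b" using p by (simp add: prime_elem_dvd_mult_iff)
    then show "f x dvd a \<or> f x dvd b"
    proof
      assume "x dvd f a" then have "f x dvd f (f a)" by (rule dvd)
      then show ?thesis using inv by simp
    next
      assume "x dvd f b" then have "f x dvd f (f b)" by (rule dvd)
      then show ?thesis using inv by simp
    qed
  qed
qed

lemma prime_negM: "prime_elem X \<Longrightarrow> prime_elem (negM X)"
  by (rule prime_inv_hom[of negM, OF _ negM_negM]) (simp_all add: negM_mc mc_hom)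

lemma claim2:
  fixes A :: "complex poly poly"
  assumes irr: "irreducible A" and ev: "negM A = A"
  shows "irreducible (sqM A)"
proof -
  define Ap where "Ap = sqM A"
  define rh where "rh = mc [:0,\<i>:]"
  have rh_hom: "rh (X * Y) = rh X * rh Y" for X Y unfolding rh_def mc_hom ..
  have rh_dvd: "X dvd Y \<Longrightarrow> rh X dvd rh Y" for X Y unfolding rh_def by (rule mc_dvd)
  have rh_rh: "rh (rh X) = negM X" for X unfolding rh_def by (rule rho_rho)
  have nM_dvd: "X dvd Y \<Longrightarrow> negM X dvd negM Y" for X Y unfolding negM_mc by (rule mc_dvd)
  have nM_hom: "negM (X * Y) = negM X * negM Y" for X Y unfolding negM_mc mc_hom ..
  have sM_hom: "sqM (X * Y) = sqM X * sqM Y" for X Y unfolding sqM_mc mc_hom ..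
  have sM_unit: "is_unit X \<Longrightarrow> is_unit (sqM X)" for X unfolding sqM_mc by (rule mc_unit)
  have A0: "A \<noteq> 0" "\<not> is_unit A" using irr unfolding irreducible_def by blast+
  have Ap0: "Ap \<noteq> 0"
  proof
    assume "Ap = 0"
    then have "sqM A = sqM 0" unfolding Ap_def sqM_mc mc_hom by simp
    then show False using sqM_inj A0 by blast
  qed
  have Apnu: "\<not> is_unit Ap"
  proof
    assume "is_unit Ap"
    then obtain a where a: "a \<noteq> 0" "Ap = [:[:a:]:]" using unit_D by blast
    then have "sqM A = sqM [:[:a:]:]" unfolding Ap_def sqM_mc mc_const by simp
    then have "A = [:[:a:]:]" by (rule sqM_inj)
    then have "is_unit A" using const_unit[OF a(1)] by simp
    with A0(2) show False by blast
  qed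
  obtain C where C: "C dvd Ap" "prime C" using prime_divisor_exists[OF Ap0 Apnu] by blast
  have pC: "prime_elem C" using C by (simp add: prime_imp_prime_elem)
  then have C0: "C \<noteq> 0" "\<not> is_unit C" unfolding prime_elem_def by blast+
  have negAp: "negM Ap = Ap" unfolding Ap_def by (rule negM_sqM)
  have sC: "negM C dvd Ap" using nM_dvd[OF C(1)] negAp by simp
  obtain Q where Q: "Ap = C * Q" using C(1) by (blast elim: dvdE)
  show "irreducible Ap"
  proof (cases "C dvd negM C")
    case True
    then obtain k where k: "negM C = C * k" by (auto elim: dvdE)
    have "C = negM C * negM k" using arg_cong[OF k, of negM] by (simp add: negM_negM nM_hom)
    also have "\<dots> = C * (k * negM k)" using k by (simp add: mult.assoc)
    finally have "k * negM k = 1" using C0 by simp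
    then have ku: "is_unit k" by (metis dvd_triv_left)
    then obtain a where a: "a \<noteq> 0" "k = [:[:a:]:]" using unit_D by blast
    have nk: "negM k = k" unfolding a negM_mc mc_const ..
    have "k * k = 1" using \<open>k * negM k = 1\<close> nk by simp
    from arg_cong[OF this, of "\<lambda>X. coeff (coeff X 0) 0"] have "a * a = 1"
      unfolding a by (simp only: coeff_mult_0 coeff_pCons_0 coeff_1 if_True) simp
    then have "a = 1 \<or> a = -1" by (metis square_eq_1_iff)
    then show ?thesis
    proof
      assume a1: "a = 1"
      have nC: "negM C = C" using k a a1 by (simp add: one_pCons[symmetric])
      obtain C1 where C1: "C = sqM C1" using even_descent[OF nC] by blast
      have "C * negM Q = C * Q" using arg_cong[OF Q, of negM] negAp Q nC nM_hom by simp
      then have "negM Q = Q" using C0 by simp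
      then obtain Q1 where Q1: "Q = sqM Q1" using even_descent by blast
      have "sqM A = sqM (C1 * Q1)" using Q C1 Q1 sM_hom unfolding Ap_def by simp
      then have "A = C1 * Q1" by (rule sqM_inj)
      then have "is_unit C1 \<or> is_unit Q1" using irr by (simp add: irreducible_def)
      then show ?thesis
      proof
        assume "is_unit C1" then have "is_unit C" using C1 sM_unit by simp
        with C0 show ?thesis by simp
      next
        assume "is_unit Q1" then have "is_unit Q" using Q1 sM_unit by simp
        then show ?thesis unfolding Q using pC
          by (simp add: irreducible_mult_unit_right prime_elem_imp_irreducible)
      qed
    next
      assume a1: "a = -1"
      have m0: "([:-1:] :: complex poly) = -1" by (rule poly_eqI) (simp add: coeff_pCons split: nat.split)
      have m1: "([:[:-1:]:] :: complex poly poly) = -1"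
        by (rule poly_eqI) (simp add: coeff_pCons m0 split: nat.split)
      have nC: "negM C = - C" using k a a1 m1 by simp
      have "poly (coeff C i) 0 = 0" for i
      proof -
        have "poly (coeff (negM C) i) 0 = poly (coeff C i) 0"
          unfolding negM_mc by (rule poly_coeff_mc0, simp)
        then show ?thesis using nC by simp
      qed
      then have "M1 dvd C" by (rule M1_dvd)
      then have "M1 dvd Ap" using C(1) by (rule dvd_trans)
      then have "poly (coeff A i) 0 = 0" for i
        using M1_dvdD[of Ap i] poly_coeff_mc0[of "[:0,0,1:]" A i] unfolding Ap_def sqM_mc by simp
      then have "M1 dvd A" by (rule M1_dvd)
      then obtain Z where Z: "A = M1 * Z" by (auto elim: dvdE)
      then have "is_unit Z" using irr M1_not_unit by (auto simp: irreducible_def)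
      then obtain z where z: "Z = [:[:z:]:]" using unit_D by blast
      have nZ: "negM Z = Z" unfolding z negM_mc mc_const ..
      have "negM A = negM M1 * negM Z" using Z nM_hom by simp
      also have "\<dots> = - A" unfolding nZ negM_M1 Z by simp
      finally have "negM A = - A" .
      with ev have "A = - A" by simp
      with A0 show ?thesis by simp
    qed
  next
    case False
    have "negM C dvd C * Q" using sC Q by simp
    moreover have pnC: "prime_elem (negM C)" using pC by (rule prime_negM)
    ultimately have "negM C dvd C \<or> negM C dvd Q" by (simp add: prime_elem_dvd_mult_iff)
    moreover have "\<not> negM C dvd C" using False nM_dvd negM_negM by metis
    ultimately obtain Q' where Q': "Q = negM C * Q'" by (auto elim: dvdE)
    define N where "N = C * negM C"
    have ApN: "Ap = N * Q'" unfolding N_def Q Q' by (simp add: mult.assoc)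
    have nN: "negM N = N" unfolding N_def nM_hom negM_negM by (simp add: mult.commute)
    have N0: "N \<noteq> 0" using ApN Ap0 by auto
    have "N * negM Q' = N * Q'" using arg_cong[OF ApN, of negM] negAp ApN nN nM_hom by simp
    then have "negM Q' = Q'" using N0 by simp
    then obtain Q1 where Q1: "Q' = sqM Q1" using even_descent by blast
    obtain N1 where N1: "N = sqM N1" using even_descent[OF nN] by blast
    have "sqM A = sqM (N1 * Q1)" using ApN N1 Q1 sM_hom unfolding Ap_def by simp
    then have "A = N1 * Q1" by (rule sqM_inj)
    then have "is_unit N1 \<or> is_unit Q1" using irr by (simp add: irreducible_def)
    moreover have "\<not> is_unit N1"
    proof
      assume "is_unit N1" then have "is_unit N" using N1 sM_unit by simp
      then have "is_unit C" unfolding N_def by simp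
      with C0 show False by simp
    qed
    ultimately have uQ: "is_unit Q1" by simp
    have uQ': "is_unit (rh Q')" unfolding rh_def Q1 sqM_mc by (rule mc_unit, rule mc_unit, rule uQ)
    have "rh Ap = Ap" unfolding Ap_def rh_def rho_sqM ev ..
    then have "rh Ap = rh C * (rh (negM C) * rh Q')" unfolding ApN N_def
      by (simp add: rh_hom mult.assoc flip: ApN[unfolded N_def])
    then have "C dvd rh C * (rh (negM C) * rh Q')" using C(1) \<open>rh Ap = Ap\<close> by simp
    then have "C dvd rh C \<or> C dvd rh (negM C) \<or> C dvd rh Q'" using pC by (simp add: prime_elem_dvd_mult_iff)
    moreover have "\<not> C dvd rh Q'" using uQ' C0 dvd_unit_imp_unit by blast
    moreover have "\<not> C dvd rh C"
    proof
      assume "C dvd rh C" then have "rh C dvd negM C" using rh_dvd rh_rh by metis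
      then have "C dvd negM C" using \<open>C dvd rh C\<close> dvd_trans by blast
      with False show False by simp
    qed
    moreover have "\<not> C dvd rh (negM C)"
    proof
      assume h: "C dvd rh (negM C)"
      have e: "rh (rh (negM C)) = C" using rh_rh negM_negM by simp
      from rh_dvd[OF h] have h2: "rh C dvd C" using e by simp
      from rh_dvd[OF h2] have "negM C dvd rh C" using rh_rh by simp
      then have "negM C dvd C" using h2 dvd_trans by blast
      from nM_dvd[OF this] have "C dvd negM C" using negM_negM by simp
      with False show False by simp
    qed
    ultimately show ?thesis by blast
  qed
qed


lemma nn_outer: "([:0,-1:] :: complex poly poly) \<circ>\<^sub>p [:0,-1:] = [:0,1:]"
  by (simp add: pcompose_pCons)
lemma x2_outer: "([:0,0,1:] :: complex poly poly) \<circ>\<^sub>p [:0,-1:] = [:0,0,1:]"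
  by (simp add: pcompose_pCons)
lemma x_outer: "([:0,1:] :: complex poly poly) \<circ>\<^sub>p [:0,-1:] = - [:0,1:]"
  by (simp add: pcompose_pCons neg_one_const)
lemma x_x2_outer: "([:0,1:] :: complex poly poly) \<circ>\<^sub>p [:0,0,1:] = [:0,1:] * [:0,1:]"
  by (simp add: pcompose_pCons)

lemma negL_hom: "negL (X * Y) = negL X * negL Y"
  unfolding negL_def by (rule pcompose_mult)
lemma negL_negL: "negL (negL X) = X"
  unfolding negL_def pcompose_assoc[symmetric] nn_outer pcompose_idR ..
lemma negL_psi: "negL (X \<circ>\<^sub>p [:0,0,1:]) = X \<circ>\<^sub>p [:0,0,1:]"
  unfolding negL_def by (simp only: x2_outer flip: pcompose_assoc)
lemma negL_const: "negL [:c:] = [:c:]"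
  unfolding negL_def by simp

lemma mc_x2: "mc q ([:0,0,1:] :: complex poly poly) = [:0,0,1:]"
  by (rule poly_eqI) (simp add: coeff_mc coeff_pCons split: nat.split)
lemma mc_nn: "mc q ([:0,-1:] :: complex poly poly) = [:0,-1:]"
  by (rule poly_eqI) (simp add: coeff_mc coeff_pCons pcompose_uminus pcompose_1 split: nat.split)

lemma mc_pcompose: "mc q (X \<circ>\<^sub>p Y) = mc q X \<circ>\<^sub>p mc q Y"
  unfolding mc_def by (rule pcompose_hom.map_poly_pcompose)

lemma sqM_psi: "sqM (X \<circ>\<^sub>p [:0,0,1:]) = sqM X \<circ>\<^sub>p [:0,0,1:]"
  unfolding sqM_mc mc_pcompose mc_x2 ..
lemma sqM_negL: "sqM (negL X) = negL (sqM X)"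
  unfolding sqM_mc negL_def mc_pcompose mc_nn ..

lemma prime_negL: "prime_elem X \<Longrightarrow> prime_elem (negL X)"
  by (rule prime_inv_hom[of negL, OF negL_hom negL_negL]) (simp_all add: negL_def)

lemma psi_unit: fixes X :: "complex poly poly"
  assumes "is_unit (X \<circ>\<^sub>p [:0,0,1:])" shows "is_unit X"
proof -
  obtain a where a: "a \<noteq> 0" "X \<circ>\<^sub>p [:0,0,1:] = [:[:a:]:]" using unit_D[OF assms] by blast
  have "degree (X \<circ>\<^sub>p [:0,0,1:]) = degree X * 2" by (simp add: degree_pcompose)
  moreover have "degree (X \<circ>\<^sub>p [:0,0,1:]) = 0" unfolding a(2) by simp
  ultimately have "degree X = 0" by simp
  then obtain c where c: "X = [:c:]" by (metis degree_eq_zeroE)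
  then have "X \<circ>\<^sub>p [:0,0,1:] = [:c:]" by simp
  then have "X = [:[:a:]:]" using a c by simp
  then show ?thesis using const_unit[OF a(1)] by simp
qed

lemma degree_sqM: "degree (sqM X) = degree X"
proof -
  have "degree (mc [:0,0,1:] X) = degree X"
    unfolding mc_def
  proof (rule Ring_Hom_Poly.degree_map_poly)
    show "(lead_coeff X \<circ>\<^sub>p [:0,0,1:] = 0) = (X = 0)"
      using pcompose_eq_0[of "lead_coeff X" "[:0,0,1:] :: complex poly"] by auto
  qed
  then show ?thesis unfolding sqM_mc .
qed

lemma key_unit:
  fixes A F G :: "complex poly poly"
  defines "Ap \<equiv> sqM A"
  assumes pAp: "prime_elem Ap" and nL: "negL A \<noteq> A"
    and d: "Ap dvd F \<circ>\<^sub>p [:0,0,1:]"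
    and e: "(F \<circ>\<^sub>p [:0,0,1:]) * (G \<circ>\<^sub>p [:0,0,1:]) = Ap * negL Ap"
  shows "is_unit G"
proof -
  obtain H where H: "F \<circ>\<^sub>p [:0,0,1:] = Ap * H" using d by (blast elim: dvdE)
  have Ap0: "Ap \<noteq> 0" using pAp by (simp add: prime_elem_def)
  have "Ap * (H * (G \<circ>\<^sub>p [:0,0,1:])) = Ap * negL Ap" using e H by (simp add: mult.assoc)
  then have HG: "H * (G \<circ>\<^sub>p [:0,0,1:]) = negL Ap" using Ap0 by simp
  have "irreducible (negL Ap)" using prime_negL[OF pAp] by (simp add: prime_elem_imp_irreducible)
  then have "is_unit H \<or> is_unit (G \<circ>\<^sub>p [:0,0,1:])" using HG by (metis irreducibleD)
  then show ?thesis
  proof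
    assume "is_unit (G \<circ>\<^sub>p [:0,0,1:])" then show ?thesis by (rule psi_unit)
  next
    assume "is_unit H"
    then obtain h where h: "h \<noteq> 0" "H = [:[:h:]:]" using unit_D by blast
    have nH: "negL H = H" unfolding h negL_const ..
    have H0: "H \<noteq> 0" using h by simp
    have "negL Ap * H = Ap * H" using arg_cong[OF H, of negL] H
      unfolding negL_psi negL_hom nH by simp
    then have "negL Ap = Ap" using H0 by (metis mult_cancel_right)
    then have "sqM (negL A) = sqM A" unfolding Ap_def sqM_negL .
    then have "negL A = A" by (rule sqM_inj)
    with nL show ?thesis by simp
  qed
qed

theorem proposition4p2:
  fixes A :: "complex poly poly"
  assumes irr: "irreducible A"
    and even_M: "negM A = A"
    and not_even_L: "negL A \<noteq> A"
  shows "irreducible (sqM (R_poly A)) \<and> degree (R_poly A) = degree A"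
proof -
  have A0: "A \<noteq> 0" using irr by (simp add: irreducible_def)
  have degA: "degree A \<ge> 1"
  proof (rule ccontr)
    assume "\<not> degree A \<ge> 1"
    then have "degree A = 0" by simp
    then obtain c where "A = [:c:]" by (metis degree_eq_zeroE)
    then have "negL A = A" by (simp add: negL_const)
    with not_even_L show False by simp
  qed
  obtain Ev Od where A: "A = Ev \<circ>\<^sub>p [:0,0,1:] + [:0,1:] * (Od \<circ>\<^sub>p [:0,0,1:])"
    using evenodd_decomp by blast
  define R where "R = Ev * Ev - [:0,1:] * Od * Od"
  have RR: "R_poly A = R" unfolding R_poly_def varL_def R_def by (rule res_main[OF A degA])
  define E' where "E' = Ev \<circ>\<^sub>p [:0,0,1:]"
  define O' where "O' = Od \<circ>\<^sub>p [:0,0,1:]"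
  have A': "A = E' + [:0,1:] * O'" unfolding E'_def O'_def by (rule A)
  have nA: "negL A = E' - [:0,1:] * O'"
    unfolding A' negL_def pcompose_add pcompose_mult x_outer
    unfolding negL_def[symmetric] E'_def O'_def negL_psi by simp
  have r2: "(a + x * b) * (a - x * b) = a * a - (x * x) * b * b" for a b x :: "complex poly poly"
    by (simp add: algebra_simps)
  have psiR0: "R \<circ>\<^sub>p [:0,0,1:] = E' * E' - ([:0,1:] * [:0,1:]) * O' * O'"
    unfolding R_def pcompose_diff pcompose_mult x_x2_outer E'_def O'_def ..
  have "A * negL A = (E' + [:0,1:] * O') * (E' - [:0,1:] * O')" unfolding nA using A' by simp
  then have psiR: "R \<circ>\<^sub>p [:0,0,1:] = A * negL A" unfolding psiR0 r2 by simp
  have nA0: "negL A \<noteq> 0" using A0 negL_negL[of A] by (auto simp: negL_def)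
  have d1: "degree (R \<circ>\<^sub>p [:0,0,1:]) = degree R * 2" by (simp add: degree_pcompose)
  have d2: "degree (A * negL A) = degree A * 2"
    using degree_mult_eq[OF A0 nA0] by (simp add: negL_def degree_pcompose)
  have "degree R * 2 = degree A * 2" using d1 d2 psiR by metis
  then have degR: "degree R = degree A" by simp
  define P where "P = sqM R"
  define Ap where "Ap = sqM A"
  have irrAp: "irreducible Ap" unfolding Ap_def by (rule claim2[OF irr even_M])
  then have pAp: "prime_elem Ap" by (simp add: prime_elem_iff_irreducible)
  have "P \<circ>\<^sub>p [:0,0,1:] = sqM (R \<circ>\<^sub>p [:0,0,1:])" unfolding P_def by (rule sqM_psi[symmetric])
  also have "\<dots> = sqM (A * negL A)" unfolding psiR ..
  also have "\<dots> = sqM A * sqM (negL A)" unfolding sqM_mc mc_hom(1) ..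
  also have "sqM (negL A) = negL (sqM A)" by (rule sqM_negL)
  finally have psiP: "P \<circ>\<^sub>p [:0,0,1:] = Ap * negL Ap" unfolding Ap_def .
  have degP: "degree P = degree A" unfolding P_def degree_sqM degR ..
  have "irreducible P"
  proof (rule irreducibleI)
    show "P \<noteq> 0" using degP degA by auto
    show "\<not> is_unit P"
    proof
      assume "is_unit P"
      then obtain a where "P = [:[:a:]:]" using unit_D by blast
      then have "degree P = 0" by simp
      with degP degA show False by simp
    qed
    fix F G assume PFG: "P = F * G"
    have e: "(F \<circ>\<^sub>p [:0,0,1:]) * (G \<circ>\<^sub>p [:0,0,1:]) = Ap * negL Ap"
      using psiP unfolding PFG pcompose_mult .
    have "Ap dvd (F \<circ>\<^sub>p [:0,0,1:]) * (G \<circ>\<^sub>p [:0,0,1:])" using e by simp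
    then have "Ap dvd F \<circ>\<^sub>p [:0,0,1:] \<or> Ap dvd G \<circ>\<^sub>p [:0,0,1:]"
      using pAp by (simp add: prime_elem_dvd_mult_iff)
    then show "is_unit F \<or> is_unit G"
    proof
      assume "Ap dvd F \<circ>\<^sub>p [:0,0,1:]"
      from key_unit[OF pAp[unfolded Ap_def] not_even_L this[unfolded Ap_def] e[unfolded Ap_def]]
      show ?thesis by simp
    next
      assume "Ap dvd G \<circ>\<^sub>p [:0,0,1:]"
      moreover have "(G \<circ>\<^sub>p [:0,0,1:]) * (F \<circ>\<^sub>p [:0,0,1:]) = Ap * negL Ap"
        using e by (simp add: mult.commute)
      ultimately have "is_unit F"
        using key_unit[OF pAp[unfolded Ap_def] not_even_L] unfolding Ap_def by blast
      then show ?thesis by simp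
    qed
  qed
  then show ?thesis unfolding RR P_def[symmetric] using degR by simp
qed

end
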